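(* Let $X$ be an infinite-dimensional complex separable Hilbert space, $A\in\mathcal B(X)$, $0<\tau<\infty$, and $\mathcal G\subset X$ countable. If $\{e^{tA^*}g\}_{g\in\mathcal G,\,t\in[0,\tau)}$ is a semi-continuous frame for $X$, then $\mathcal G$ is infinite.
   Context: $e^{tA^*}=\sum_{n\ge0}(tA^* )^n/n!$. The family $\{e^{tA^*}g\}_{g\in\mathcal G,t\in[0,\tau)}$ is a semi-continuous frame if there are $c_1,c_2>0$ with $c_1\|x\|^2\le\sum_{g\in\mathcal G}\int_0^\tau|\langle x,e^{tA^*}g\rangle|^2dt\le c_2\|x\|^2$ for all $x\in X$. *)

theory Defs
  imports "HOL-Analysis.Analysis"
begin

text \<open>Complex Hilbert spaces: a Banach space (over the reals) equipped with a complex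
scalar multiplication extending the real one and a complex inner product
(linear in the first argument, conjugate symmetric) inducing the norm.\<close>

class complex_hilbert = banach +
  fixes scaleC :: "complex \<Rightarrow> 'a \<Rightarrow> 'a"
    and cinner :: "'a \<Rightarrow> 'a \<Rightarrow> complex"
  assumes scaleC_of_real: "scaleC (complex_of_real r) x = scaleR r x"
    and scaleC_add_right: "scaleC a (x + y) = scaleC a x + scaleC a y"
    and scaleC_add_left: "scaleC (a + b) x = scaleC a x + scaleC b x"
    and scaleC_scaleC: "scaleC a (scaleC b x) = scaleC (a * b) x"
    and cinner_add_left: "cinner (x + y) z = cinner x z + cinner y z"
    and cinner_scaleC_left: "cinner (scaleC a x) y = a * cinner x y"
    and cinner_commute: "cinner y x = cnj (cinner x y)"
    and norm_eq_sqrt_cinner: "norm x = sqrt (Re (cinner x x))"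

definition separable_hilbert :: "'a::complex_hilbert itself \<Rightarrow> bool" where
  "separable_hilbert _ \<longleftrightarrow> (\<exists>D::'a set. countable D \<and> closure D = UNIV)"

definition finite_dim_complex :: "'a::complex_hilbert itself \<Rightarrow> bool" where
  "finite_dim_complex _ \<longleftrightarrow>
     (\<exists>S::'a set. finite S \<and> (\<forall>x. \<exists>c. x = (\<Sum>s\<in>S. scaleC (c s) s)))"

definition bounded_clinear_op :: "('a::complex_hilbert \<Rightarrow> 'a) \<Rightarrow> bool" where
  "bounded_clinear_op A \<longleftrightarrow>
     (\<forall>x y. A (x + y) = A x + A y) \<and> (\<forall>a x. A (scaleC a x) = scaleC a (A x)) \<and>
     (\<exists>K. \<forall>x. norm (A x) \<le> K * norm x)"

definition adjoint :: "('a::complex_hilbert \<Rightarrow> 'a) \<Rightarrow> ('a \<Rightarrow> 'a)" where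
  "adjoint A = (\<lambda>y. THE z. \<forall>x. cinner (A x) y = cinner x z)"

definition exp_op :: "real \<Rightarrow> ('a::complex_hilbert \<Rightarrow> 'a) \<Rightarrow> 'a \<Rightarrow> 'a" where
  "exp_op t B g = (\<Sum>n. scaleR (t ^ n / fact n) ((B ^^ n) g))"

definition semi_continuous_frame ::
    "('a::complex_hilbert \<Rightarrow> 'a) \<Rightarrow> 'a set \<Rightarrow> real \<Rightarrow> bool" where
  "semi_continuous_frame A G \<tau> \<longleftrightarrow>
     (\<exists>c1 c2. c1 > 0 \<and> c2 > 0 \<and>
        (\<forall>x. ennreal (c1 * (norm x)\<^sup>2)
               \<le> (\<Sum>\<^sub>\<infinity>g\<in>G. \<integral>\<^sup>+ t\<in>{0..<\<tau>}. ennreal ((cmod (cinner x (exp_op t (adjoint A) g)))\<^sup>2) \<partial>lborel)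
          \<and> (\<Sum>\<^sub>\<infinity>g\<in>G. \<integral>\<^sup>+ t\<in>{0..<\<tau>}. ennreal ((cmod (cinner x (exp_op t (adjoint A) g)))\<^sup>2) \<partial>lborel)
               \<le> ennreal (c2 * (norm x)\<^sup>2)))"

end

theory Submission
  imports Defs
begin


lemma cinner_zero_left[simp]: "cinner 0 y = (0::complex)"
proof -
  have "cinner (0 + 0::'a::complex_hilbert) y = cinner 0 y + cinner 0 y" by (rule cinner_add_left)
  then show ?thesis by simp
qed

lemma cinner_zero_right[simp]: "cinner (x::'a::complex_hilbert) 0 = 0"
  by (subst cinner_commute) simp

lemma cinner_add_right: "cinner (x::'a::complex_hilbert) (y + z) = cinner x y + cinner x z"
  by (subst (1 2 3) cinner_commute) (simp add: cinner_add_left)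

lemma cinner_minus_left: "cinner (- x::'a::complex_hilbert) y = - cinner x y"
proof -
  have "cinner (-x + x) y = cinner (-x) y + cinner x y" by (rule cinner_add_left)
  then show ?thesis by (simp add: eq_neg_iff_add_eq_0)
qed

lemma cinner_diff_left: "cinner (x - y::'a::complex_hilbert) z = cinner x z - cinner y z"
  using cinner_add_left[of x "-y" z] by (simp add: cinner_minus_left)

lemma cinner_diff_right: "cinner (x::'a::complex_hilbert) (y - z) = cinner x y - cinner x z"
  by (subst (1 2 3) cinner_commute) (simp add: cinner_diff_left)

lemma cinner_scaleC_right: "cinner (x::'a::complex_hilbert) (scaleC a y) = cnj a * cinner x y"
  by (subst (1 2) cinner_commute) (simp add: cinner_scaleC_left)

lemma cinner_scaleR_left: "cinner (scaleR r x::'a::complex_hilbert) y = of_real r * cinner x y"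
  by (metis scaleC_of_real cinner_scaleC_left)

lemma cinner_scaleR_right: "cinner (x::'a::complex_hilbert) (scaleR r y) = of_real r * cinner x y"
  by (metis scaleC_of_real cinner_scaleC_right complex_cnj_complex_of_real)

lemma cinner_self: "cinner (x::'a::complex_hilbert) x = of_real ((norm x)^2)"
proof -
  have im: "Im (cinner x x) = 0"
    using cinner_commute[of x x] by (metis cnj.sel(2) equation_minus_iff zero_neq_neg_one mult_minus1 neg_equal_zero)
  have "Re (cinner x x) \<ge> 0"
  proof (rule ccontr)
    assume "\<not> 0 \<le> Re (cinner x x)"
    then have "sqrt (Re (cinner x x)) < 0" by simp
    then show False using norm_eq_sqrt_cinner[of x] norm_ge_zero[of x] by linarith
  qed
  then have "(norm x)^2 = Re (cinner x x)" by (simp add: norm_eq_sqrt_cinner)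
  then show ?thesis using im by (simp add: complex_eq_iff)
qed

lemma cinner_self_eq_0: "cinner (x::'a::complex_hilbert) x = 0 \<longleftrightarrow> x = 0"
  by (simp add: cinner_self)

lemma scaleC_zero_right[simp]: "scaleC a (0::'a::complex_hilbert) = 0"
  using scaleC_add_right[of a "0::'a" 0] by simp

lemma scaleC_zero_left[simp]: "scaleC 0 (x::'a::complex_hilbert) = 0"
  using scaleC_of_real[of 0 x] by simp

lemma scaleC_one[simp]: "scaleC 1 (x::'a::complex_hilbert) = x"
  using scaleC_of_real[of 1 x] by simp

lemma proj_identity:
  fixes x y :: "'a::complex_hilbert"
  assumes "y \<noteq> 0"
  shows "(norm (x - scaleC (cinner x y / of_real ((norm y)^2)) y))^2
         = (norm x)^2 - (cmod (cinner x y))^2 / (norm y)^2"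
proof -
  define p where "p = cinner x y"
  define N where "N = (norm y)^2"
  have N: "N > 0" using assms by (simp add: N_def)
  define l where "l = p / of_real N"
  have "of_real ((norm (x - scaleC l y))^2) = cinner (x - scaleC l y) (x - scaleC l y)"
    by (simp add: cinner_self)
  also have "\<dots> = cinner x x - l * cinner y x - cnj l * p + l * cnj l * cinner y y"
    by (simp add: cinner_diff_left cinner_diff_right cinner_scaleC_left cinner_scaleC_right p_def algebra_simps)
  also have "\<dots> = of_real ((norm x)^2) - l * cnj p - cnj l * p + l * cnj l * of_real N"
    by (simp add: cinner_self N_def p_def cinner_commute[of y x])
  also have "\<dots> = of_real ((norm x)^2 - (cmod p)^2 / N)"
    using N by (simp add: l_def field_simps complex_norm_square[symmetric] power2_eq_square)
  finally show ?thesis unfolding p_def N_def l_def by (metis of_real_eq_iff)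
qed

lemma cauchy_schwarz: "cmod (cinner (x::'a::complex_hilbert) y) \<le> norm x * norm y"
proof (cases "y = 0")
  case True then show ?thesis by simp
next
  case False
  have "0 \<le> (norm x)^2 - (cmod (cinner x y))^2 / (norm y)^2"
    using proj_identity[OF False, of x] by (metis zero_le_power2)
  then have "(cmod (cinner x y))^2 \<le> (norm x * norm y)^2"
    using False by (simp add: field_simps power_mult_distrib)
  then show ?thesis by (rule power2_le_imp_le) simp
qed



lemma parallelogram:
  fixes a b :: "'a::complex_hilbert"
  shows "(norm (a + b))^2 + (norm (a - b))^2 = 2 * (norm a)^2 + 2 * (norm b)^2"
proof -
  have "complex_of_real ((norm (a + b))^2 + (norm (a - b))^2) = cinner (a+b) (a+b) + cinner (a-b) (a-b)"
    by (simp add: cinner_self)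
  also have "\<dots> = 2 * cinner a a + 2 * cinner b b"
    by (simp add: cinner_add_left cinner_add_right cinner_diff_left cinner_diff_right)
  also have "\<dots> = complex_of_real (2 * (norm a)^2 + 2 * (norm b)^2)"
    by (simp add: cinner_self)
  finally show ?thesis by (metis of_real_eq_iff)
qed

lemma riesz:
  fixes f :: "'a::complex_hilbert \<Rightarrow> complex"
  assumes add: "\<And>x y. f (x + y) = f x + f y"
    and sc: "\<And>a x. f (scaleC a x) = a * f x"
    and bd: "\<And>x. cmod (f x) \<le> M * norm x"
  shows "\<exists>z. \<forall>x. f x = cinner x z"
proof (cases "\<forall>x. f x = 0")
  case True then show ?thesis by (intro exI[of _ 0]) simp
next
  case False
  have f0: "f 0 = 0" using sc[of 0 0] by simp
  have fdiff: "f (x - y) = f x - f y" for x y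
    using add[of "x - y" y] by simp
  have fR: "f (scaleR r x) = of_real r * f x" for r x
    by (metis sc scaleC_of_real)
  obtain u0 where "f u0 \<noteq> 0" using False by blast
  define u where "u = scaleC (1 / f u0) u0"
  have fu: "f u = 1" using \<open>f u0 \<noteq> 0\<close> by (simp add: u_def sc)
  define H where "H = {x. f x = 1}"
  define d where "d = Inf (norm ` H)"
  have Hne: "norm ` H \<noteq> {}" using fu H_def by blast
  have bdd: "bdd_below (norm ` H)" by (rule bdd_belowI[of _ 0]) auto
  have dle: "d \<le> norm h" if "h \<in> H" for h
    unfolding d_def using bdd that by (intro cInf_lower) auto
  have d0: "0 \<le> d" unfolding d_def using Hne by (intro cInf_greatest) auto
  define e :: "nat \<Rightarrow> real" where "e n = inverse (real (Suc n))" for n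
  have e0: "0 < e n" "e n \<le> 1" for n by (auto simp: e_def field_simps)
  have "\<exists>x\<in>H. norm x < d + e n" for n
  proof -
    have "Inf (norm ` H) < d + e n" using e0[of n] d_def by simp
    then obtain y where "y \<in> norm ` H" "y < d + e n" using cInf_lessD[OF Hne] by blast
    then show ?thesis by blast
  qed
  then obtain X where XH: "\<And>n. X n \<in> H" and Xn: "\<And>n. norm (X n) < d + e n" by metis
  have bound: "(norm (X m - X n))^2 \<le> (4*d+2) * (e m + e n)" for m n
  proof -
    have "f (scaleR (1/2) (X m + X n)) = 1" using XH by (simp add: H_def fR add)
    then have "d \<le> norm (scaleR (1/2) (X m + X n))" by (intro dle) (simp add: H_def)
    then have "2 * d \<le> norm (X m + X n)" by simp
    then have A: "4 * d^2 \<le> (norm (X m + X n))^2"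
      using d0 by (metis mult_2 power2_eq_square add_mono mult_mono norm_ge_zero order_trans zero_le_mult_iff distrib_left power_mono mult.commute
            real_sqrt_four real_sqrt_mult real_sqrt_le_iff real_sqrt_pow2 zero_le_numeral real_sqrt_abs abs_of_nonneg)
    have B: "(norm (X m))^2 \<le> (d + e m)^2" using Xn[of m] by (intro power_mono) auto
    have C: "(norm (X n))^2 \<le> (d + e n)^2" using Xn[of n] by (intro power_mono) auto
    have P: "(norm (X m - X n))^2 = 2 * (norm (X m))^2 + 2 * (norm (X n))^2 - (norm (X m + X n))^2"
      using parallelogram[of "X m" "X n"] by simp
    have "(norm (X m - X n))^2 \<le> 2 * (d + e m)^2 + 2 * (d + e n)^2 - 4 * d^2"
      using A B C P by linarith
    also have "\<dots> = 4 * d * (e m + e n) + 2 * (e m)^2 + 2 * (e n)^2" by (simp add: power2_eq_square algebra_simps)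
    also have "\<dots> \<le> (4*d+2) * (e m + e n)"
    proof -
      have "(e m)^2 \<le> e m" "(e n)^2 \<le> e n" using e0 by (auto simp: power2_eq_square mult_le_cancel_left1 intro: mult_le_one)
      then show ?thesis by (simp add: algebra_simps)
    qed
    finally show ?thesis .
  qed
  have "Cauchy X"
  proof (rule CauchyI)
    fix \<epsilon> :: real assume "0 < \<epsilon>"
    obtain N :: nat where N: "2 * (4*d+2) / \<epsilon>^2 < real N" using reals_Archimedean2 by blast
    have "norm (X m - X n) < \<epsilon>" if "m \<ge> N" "n \<ge> N" for m n
    proof -
      have em: "e m \<le> inverse (real (Suc N))" "e n \<le> inverse (real (Suc N))"
        using that by (auto simp: e_def intro!: le_imp_inverse_le)
      have "(norm (X m - X n))^2 \<le> (4*d+2) * (2 * inverse (real (Suc N)))"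
        using bound[of m n] em d0 by (smt (verit) mult_left_mono)
      also have "\<dots> < \<epsilon>^2"
      proof -
        have "2 * (4*d+2) < \<epsilon>^2 * real N" using N \<open>0 < \<epsilon>\<close> by (simp add: field_simps)
        then have "2 * (4*d+2) < \<epsilon>^2 * real (Suc N)"
          by (smt (verit) of_nat_Suc mult_left_mono zero_le_power2)
        then show ?thesis by (simp add: field_simps)
      qed
      finally show ?thesis using \<open>0 < \<epsilon>\<close> by (meson power2_less_imp_less less_imp_le)
    qed
    then show "\<exists>M. \<forall>m\<ge>M. \<forall>n\<ge>M. norm (X m - X n) < \<epsilon>" by blast
  qed
  then obtain w where Xw: "X \<longlonglongrightarrow> w" using Cauchy_convergent_iff convergent_def by blast
  have fw: "f w = 1"
  proof -
    have "(\<lambda>n. norm (X n - w)) \<longlonglongrightarrow> 0" using Xw by (simp add: LIM_zero tendsto_norm_zero)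
    then have "(\<lambda>n. M * norm (X n - w)) \<longlonglongrightarrow> 0" by (simp add: tendsto_mult_right_zero)
    then have "(\<lambda>n. f (X n) - f w) \<longlonglongrightarrow> 0"
      by (rule Lim_null_comparison[rotated]) (simp add: bd fdiff[symmetric])
    then have "(\<lambda>n. f (X n)) \<longlonglongrightarrow> f w" by (rule LIM_zero_cancel)
    moreover have "(\<lambda>n. f (X n)) \<longlonglongrightarrow> 1" using XH by (simp add: H_def)
    ultimately show ?thesis using LIMSEQ_unique by blast
  qed
  have wmin: "norm w \<le> norm h" if "h \<in> H" for h
  proof -
    have "(\<lambda>n. norm (X n)) \<longlonglongrightarrow> norm w" using Xw by (rule tendsto_norm)
    moreover have "(\<lambda>n. d + e n) \<longlonglongrightarrow> d + 0"
      unfolding e_def by (intro tendsto_add tendsto_const LIMSEQ_inverse_real_of_nat)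
    ultimately have "norm w \<le> d + 0" by (rule LIMSEQ_le) (use Xn less_imp_le in blast)
    then show ?thesis using dle[OF that] by simp
  qed
  have orth: "cinner w m = 0" if "f m = 0" for m
  proof (cases "m = 0")
    case True then show ?thesis by simp
  next
    case False
    define h where "h = w - scaleC (cinner w m / of_real ((norm m)^2)) m"
    have "h \<in> H" using fw that by (simp add: H_def h_def fdiff sc)
    then have "(norm w)^2 \<le> (norm h)^2" using wmin by (simp add: power_mono)
    also have "(norm h)^2 = (norm w)^2 - (cmod (cinner w m))^2 / (norm m)^2"
      unfolding h_def by (rule proj_identity[OF False])
    finally have "(norm w)^2 \<le> (norm w)^2 - (cmod (cinner w m))^2 / (norm m)^2" .
    then have "(cmod (cinner w m))^2 / (norm m)^2 \<le> 0" by simp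
    then have "(cmod (cinner w m))^2 \<le> 0" using False by (simp add: divide_le_0_iff)
    then show ?thesis by simp
  qed
  have w0: "w \<noteq> 0" using fw f0 by auto
  define z where "z = scaleR (1 / (norm w)^2) w"
  have "f x = cinner x z" for x
  proof -
    have "f (x - scaleC (f x) w) = 0" by (simp add: fdiff sc fw)
    then have "cinner w (x - scaleC (f x) w) = 0" by (rule orth)
    then have "cinner w x = cnj (f x) * cinner w w" by (simp add: cinner_diff_right cinner_scaleC_right)
    then have "cinner x w = f x * of_real ((norm w)^2)"
      by (subst cinner_commute) (simp add: cinner_self)
    then show ?thesis using w0 by (simp add: z_def cinner_scaleR_right)
  qed
  then show ?thesis by blast
qed



lemma adjoint_prop:
  fixes A :: "'a::complex_hilbert \<Rightarrow> 'a"
  assumes "bounded_clinear_op A"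
  shows "cinner (A x) y = cinner x (adjoint A y)"
proof -
  obtain K where K: "\<And>x. norm (A x) \<le> K * norm x"
    and addA: "\<And>x y. A (x + y) = A x + A y" and scA: "\<And>a x. A (scaleC a x) = scaleC a (A x)"
    using assms unfolding bounded_clinear_op_def by blast
  have "\<exists>z. \<forall>x. cinner (A x) y = cinner x z"
  proof (rule riesz[where M = "K * norm y"])
    show "cinner (A (x + x')) y = cinner (A x) y + cinner (A x') y" for x x'
      by (simp add: addA cinner_add_left)
    show "cinner (A (scaleC a x)) y = a * cinner (A x) y" for a x
      by (simp add: scA cinner_scaleC_left)
    show "cmod (cinner (A x) y) \<le> K * norm y * norm x" for x
    proof -
      have "cmod (cinner (A x) y) \<le> norm (A x) * norm y" by (rule cauchy_schwarz)
      also have "\<dots> \<le> K * norm x * norm y" using K[of x] by (simp add: mult_right_mono)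
      finally show ?thesis by (simp add: ac_simps)
    qed
  qed
  then obtain z where z: "\<forall>x. cinner (A x) y = cinner x z" by blast
  have uniq: "z' = z" if "\<forall>x. cinner (A x) y = cinner x z'" for z'
  proof -
    have "cinner (z' - z) (z' - z) = 0"
      using that z by (simp add: cinner_diff_right)
    then show ?thesis by (simp add: cinner_self_eq_0)
  qed
  have "\<exists>!z. \<forall>x. cinner (A x) y = cinner x z" using z uniq by blast
  then have "\<forall>x. cinner (A x) y = cinner x (adjoint A y)"
    unfolding adjoint_def by (rule theI')
  then show ?thesis by blast
qed

lemma adjoint_bound:
  fixes A :: "'a::complex_hilbert \<Rightarrow> 'a"
  assumes "bounded_clinear_op A"
  shows "\<exists>K\<ge>0. \<forall>y. norm (adjoint A y) \<le> K * norm y"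
proof -
  obtain K where K: "\<And>x. norm (A x) \<le> K * norm x"
    using assms unfolding bounded_clinear_op_def by blast
  define K0 where "K0 = max K 0"
  have K0: "norm (A x) \<le> K0 * norm x" for x
    using K[of x] by (smt (verit) K0_def mult_right_mono norm_ge_zero)
  have "norm (adjoint A y) \<le> K0 * norm y" for y
  proof -
    define v where "v = adjoint A y"
    have "complex_of_real ((norm v)^2) = cinner (A v) y"
      by (simp add: cinner_self adjoint_prop[OF assms] v_def)
    then have "(norm v)^2 = cmod (cinner (A v) y)" by (metis norm_of_real abs_of_nonneg zero_le_power2)
    also have "\<dots> \<le> norm (A v) * norm y" by (rule cauchy_schwarz)
    also have "\<dots> \<le> K0 * norm v * norm y" using K0[of v] by (simp add: mult_right_mono)
    finally have "norm v * norm v \<le> norm v * (K0 * norm y)" by (simp add: power2_eq_square ac_simps)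
    then have "norm v \<le> K0 * norm y \<or> norm v = 0"
      by (metis mult_le_cancel_left norm_ge_zero order.strict_iff_order)
    moreover have "0 \<le> K0 * norm y" by (simp add: K0_def)
    ultimately show ?thesis unfolding v_def by auto
  qed
  moreover have "K0 \<ge> 0" by (simp add: K0_def)
  ultimately show ?thesis by blast
qed

lemma funpow_bound:
  fixes B :: "'a::real_normed_vector \<Rightarrow> 'a"
  assumes "\<And>y. norm (B y) \<le> K * norm y" "K \<ge> 0"
  shows "norm ((B ^^ n) g) \<le> K ^ n * norm g"
proof (induction n)
  case 0 then show ?case by simp
next
  case (Suc n)
  have "norm ((B ^^ Suc n) g) \<le> K * norm ((B ^^ n) g)" using assms(1) by simp
  also have "\<dots> \<le> K * (K ^ n * norm g)" using Suc assms(2) by (rule mult_left_mono)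
  finally show ?case by simp
qed

lemma exp_op_cont:
  fixes B :: "'a::complex_hilbert \<Rightarrow> 'a"
  assumes "\<And>y. norm (B y) \<le> K * norm y" "K \<ge> 0"
  shows "continuous_on {0..T} (\<lambda>t. exp_op t B g)"
proof -
  define f where "f n t = scaleR (t ^ n / fact n) ((B ^^ n) g)" for n t
  define M where "M n = inverse (fact n) * (T * K) ^ n * norm g" for n
  have "uniform_limit {0..T} (\<lambda>n t. \<Sum>i<n. f i t) (\<lambda>t. suminf (\<lambda>i. f i t)) sequentially"
  proof (rule Weierstrass_m_test)
    show "summable M" unfolding M_def by (intro summable_mult2 summable_exp)
    fix n t assume t: "t \<in> {0..T}"
    have "norm (f n t) = t ^ n / fact n * norm ((B ^^ n) g)" using t by (simp add: f_def)
    also have "\<dots> \<le> T ^ n / fact n * (K ^ n * norm g)"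
      using t funpow_bound[OF assms, of n g]
      by (intro mult_mono divide_right_mono power_mono) auto
    also have "\<dots> = M n" by (simp add: M_def power_mult_distrib field_simps)
    finally show "norm (f n t) \<le> M n" .
  qed
  moreover have "\<forall>\<^sub>F n in sequentially. continuous_on {0..T} (\<lambda>t. \<Sum>i<n. f i t)"
    unfolding f_def by (intro always_eventually allI continuous_intros) auto
  ultimately have "continuous_on {0..T} (\<lambda>t. suminf (\<lambda>i. f i t))"
    by (intro uniform_limit_theorem) auto
  then show ?thesis by (simp add: exp_op_def f_def)
qed



lemma cinner_sum_left: "cinner (\<Sum>s\<in>S. f s) (y::'a::complex_hilbert) = (\<Sum>s\<in>S. cinner (f s) y)"
  by (induction S rule: infinite_finite_induct) (auto simp: cinner_add_left)

lemma orth_aux: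
  assumes nf: "\<not> finite_dim_complex TYPE('a::complex_hilbert)"
    and C: "finite (C :: 'a set)"
  shows "\<forall>S::'a set. finite S \<longrightarrow> (\<exists>x. (\<forall>cc. x \<noteq> (\<Sum>s\<in>S. scaleC (cc s) s)) \<and> (\<forall>c\<in>C. cinner x c = 0))"
  using C
proof (induction C rule: finite_induct)
  case empty
  then show ?case using nf unfolding finite_dim_complex_def by blast
next
  case (insert c C)
  show ?case
  proof (intro allI impI)
    fix S :: "'a set" assume S: "finite S"
    obtain x1 where x1: "\<And>cc. x1 \<noteq> (\<Sum>s\<in>S. scaleC (cc s) s)" "\<And>c'. c'\<in>C \<Longrightarrow> cinner x1 c' = 0"
      using insert.IH[rule_format, of S] S by blast
    obtain x2 where x2: "\<And>cc. x2 \<noteq> (\<Sum>s\<in>insert x1 S. scaleC (cc s) s)" "\<And>c'. c'\<in>C \<Longrightarrow> cinner x2 c' = 0"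
      using insert.IH[rule_format, of "insert x1 S"] S by blast
    show "\<exists>x. (\<forall>cc. x \<noteq> (\<Sum>s\<in>S. scaleC (cc s) s)) \<and> (\<forall>c'\<in>insert c C. cinner x c' = 0)"
    proof (cases "cinner x1 c = 0")
      case True then show ?thesis using x1 by blast
    next
      case False
      define a where "a = cinner x2 c / cinner x1 c"
      define x where "x = x2 - scaleC a x1"
      have x1S: "x1 \<notin> S"
      proof
        assume "x1 \<in> S"
        have "(\<Sum>s\<in>S. scaleC (if s = x1 then 1 else 0) s) = (\<Sum>s\<in>S. if s = x1 then x1 else 0)"
          by (intro sum.cong) auto
        also have "\<dots> = x1" using S \<open>x1 \<in> S\<close> by (simp add: sum.delta')
        finally show False using x1(1)[of "\<lambda>s. if s = x1 then 1 else 0"] by simp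
      qed
      have "\<forall>cc. x \<noteq> (\<Sum>s\<in>S. scaleC (cc s) s)"
      proof (intro allI notI)
        fix cc assume eq: "x = (\<Sum>s\<in>S. scaleC (cc s) s)"
        define cc' where "cc' = cc(x1 := a)"
        have "(\<Sum>s\<in>insert x1 S. scaleC (cc' s) s) = scaleC a x1 + (\<Sum>s\<in>S. scaleC (cc' s) s)"
          using S x1S by (simp add: cc'_def)
        also have "(\<Sum>s\<in>S. scaleC (cc' s) s) = (\<Sum>s\<in>S. scaleC (cc s) s)"
          using x1S by (intro sum.cong) (auto simp: cc'_def)
        also have "scaleC a x1 + (\<Sum>s\<in>S. scaleC (cc s) s) = x2" unfolding eq[symmetric] x_def by simp
        finally show False using x2(1)[of cc'] by simp
      qed
      moreover have "\<forall>c'\<in>insert c C. cinner x c' = 0"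
        using x1(2) x2(2) False by (auto simp: x_def a_def cinner_diff_left cinner_scaleC_left)
      ultimately show ?thesis by blast
    qed
  qed
qed

lemma exists_orth:
  assumes nf: "\<not> finite_dim_complex TYPE('a::complex_hilbert)"
    and C: "finite (C :: 'a set)"
  shows "\<exists>x. norm x = 1 \<and> (\<forall>c\<in>C. cinner x c = 0)"
proof -
  obtain x0 where x0: "x0 \<noteq> 0" "\<And>c. c\<in>C \<Longrightarrow> cinner x0 c = 0"
    using orth_aux[OF assms, rule_format, of "{}"] by auto
  define x where "x = scaleR (1 / norm x0) x0"
  have "norm x = 1" using \<open>x0 \<noteq> 0\<close> by (simp add: x_def)
  moreover have "\<forall>c\<in>C. cinner x c = 0" using x0(2) by (simp add: x_def cinner_scaleR_left)
  ultimately show ?thesis by blast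
qed

theorem corollary3p7:
  fixes A :: "'a::complex_hilbert \<Rightarrow> 'a" and G :: "'a set" and \<tau> :: real
  assumes "\<not> finite_dim_complex TYPE('a)"
    and "separable_hilbert TYPE('a)"
    and "bounded_clinear_op A"
    and "0 < \<tau>"
    and "countable G"
    and "semi_continuous_frame A G \<tau>"
  shows "infinite G"
proof
  assume fin: "finite G"
  obtain K where K0: "K \<ge> 0" and K: "\<And>y. norm (adjoint A y) \<le> K * norm y"
    using adjoint_bound[OF assms(3)] by blast
  obtain c1 where c1: "c1 > 0" and low: "\<And>x. ennreal (c1 * (norm x)\<^sup>2)
       \<le> (\<Sum>\<^sub>\<infinity>g\<in>G. \<integral>\<^sup>+ t\<in>{0..<\<tau>}. ennreal ((cmod (cinner x (exp_op t (adjoint A) g)))\<^sup>2) \<partial>lborel)"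
    using assms(6) unfolding semi_continuous_frame_def by blast
  define V where "V = (\<Union>g\<in>G. (\<lambda>t. exp_op t (adjoint A) g) ` {0..\<tau>})"
  have "compact V" unfolding V_def
    using fin by (intro compact_UN compact_continuous_image exp_op_cont[OF K K0]) auto
  define \<epsilon> where "\<epsilon> = sqrt (c1 / (real (card G) * \<tau> + 1))"
  have den: "real (card G) * \<tau> + 1 > 0" using assms(4) by (smt (verit) of_nat_0_le_iff zero_le_mult_iff)
  have eps: "\<epsilon> > 0" using c1 den by (simp add: \<epsilon>_def)
  have eps2: "\<epsilon>^2 = c1 / (real (card G) * \<tau> + 1)" using c1 den by (simp add: \<epsilon>_def)
  obtain k where k: "finite k" "V \<subseteq> (\<Union>x\<in>k. ball x \<epsilon>)"
    using seq_compact_imp_totally_bounded[OF compact_imp_seq_compact[OF \<open>compact V\<close>]] eps by blast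
  obtain x where x: "norm x = 1" "\<And>c. c\<in>k \<Longrightarrow> cinner x c = 0"
    using exists_orth[OF assms(1) k(1)] by blast
  have pt: "(cmod (cinner x (exp_op t (adjoint A) g)))\<^sup>2 \<le> \<epsilon>^2" if "g \<in> G" "t \<in> {0..<\<tau>}" for g t
  proof -
    let ?v = "exp_op t (adjoint A) g"
    have "?v \<in> V" using that unfolding V_def by (intro UN_I[of g] imageI) auto
    then obtain c where c: "c \<in> k" "dist c ?v < \<epsilon>" using k(2) by auto
    have "cinner x ?v = cinner x (?v - c)" using x(2)[OF c(1)] by (simp add: cinner_diff_right)
    then have "cmod (cinner x ?v) \<le> norm x * norm (?v - c)" by (simp add: cauchy_schwarz)
    also have "\<dots> < \<epsilon>" using c(2) x(1) by (simp add: dist_norm norm_minus_commute)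
    finally show ?thesis by (intro power_mono) auto
  qed
  have int: "(\<integral>\<^sup>+ t\<in>{0..<\<tau>}. ennreal ((cmod (cinner x (exp_op t (adjoint A) g)))\<^sup>2) \<partial>lborel)
      \<le> ennreal (\<epsilon>^2 * \<tau>)" if "g \<in> G" for g
  proof -
    have "(\<integral>\<^sup>+ t\<in>{0..<\<tau>}. ennreal ((cmod (cinner x (exp_op t (adjoint A) g)))\<^sup>2) \<partial>lborel)
        \<le> (\<integral>\<^sup>+ t. ennreal (\<epsilon>^2) * indicator {0..<\<tau>} t \<partial>lborel)"
      using pt[OF that] by (intro nn_integral_mono) (auto simp: indicator_def)
    also have "\<dots> = ennreal (\<epsilon>^2) * emeasure lborel {0..<\<tau>}"
      by (rule nn_integral_cmult_indicator) simp
    also have "\<dots> = ennreal (\<epsilon>^2 * \<tau>)" using assms(4) by (simp add: ennreal_mult)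
    finally show ?thesis .
  qed
  have "ennreal c1 = ennreal (c1 * (norm x)\<^sup>2)" using x(1) by simp
  also have "\<dots> \<le> (\<Sum>\<^sub>\<infinity>g\<in>G. \<integral>\<^sup>+ t\<in>{0..<\<tau>}. ennreal ((cmod (cinner x (exp_op t (adjoint A) g)))\<^sup>2) \<partial>lborel)"
    by (rule low)
  also have "\<dots> = (\<Sum>g\<in>G. \<integral>\<^sup>+ t\<in>{0..<\<tau>}. ennreal ((cmod (cinner x (exp_op t (adjoint A) g)))\<^sup>2) \<partial>lborel)"
    using fin by (rule infsum_finite)
  also have "\<dots> \<le> (\<Sum>g\<in>G. ennreal (\<epsilon>^2 * \<tau>))" by (intro sum_mono int)
  also have "\<dots> = ennreal (real (card G) * (\<epsilon>^2 * \<tau>))"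
    using ennreal_mult[of "real (card G)" "\<epsilon>^2*\<tau>"] assms(4) by (simp add: ennreal_of_nat_eq_real_of_nat)
  finally have "c1 \<le> real (card G) * (\<epsilon>^2 * \<tau>)"
    using assms(4) by (subst (asm) ennreal_le_iff) auto
  also have "\<dots> = c1 * (real (card G) * \<tau>) / (real (card G) * \<tau> + 1)"
    by (simp add: eps2)
  also have "\<dots> < c1" using c1 den by (simp add: field_simps)
  finally show False by simp
qed

end
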